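(* Let $n\ge1$ and let $K_2$ be the closure of the $4$--braid $(\sigma_2\sigma_1\sigma_3\sigma_2)(\sigma_1\sigma_2\sigma_3)^{4n}\sigma_3^{-1}(\sigma_2\sigma_3)^6$. Then, up to units $\pm t^i$, \[\Delta_{K_2}(t)=\sum_{i=0}^n(t^{8n+12+4i}-t^{8n+11+4i})+(t^{8n+9}-t^{8n+8})+\sum_{i=0}^{2n-1}(t^{4n+8+2i}-t^{4n+7+2i})+(t^{4n+6}-t^{4n+4})+(t^{4n+3}-t^{4n+1})+\sum_{i=0}^{n-1}(t^{4+4i}-t^{1+4i})+1.\]
   Context: $\sigma_1,\sigma_2,\sigma_3$ are the standard Artin generators of the $4$--strand braid group; $\Delta_K$ denotes the Alexander polynomial. *)

theory Defs
  imports "HOL-Computational_Algebra.Polynomial" "HOL-Computational_Algebra.Fraction_Field"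
    "Jordan_Normal_Form.Determinant"
begin

text \<open>Laurent polynomials / rational functions in t with integer coefficients.\<close>
type_synonym rf = "int poly fract"

definition tvar :: rf where "tvar = to_fract [:0, 1:]"

text \<open>A braid word in B_m is a list of nonzero integers: k > 0 stands for sigma_k,
  k < 0 for the inverse of sigma_(-k).\<close>

text \<open>Reduced Burau matrix (size (m-1)) of a single generator (Kassel--Turaev convention):
  for sigma_i it is I_(i-2) (+) [[1,t,0],[0,-t,0],[0,1,1]] (+) I_(m-i-2), truncated at the
  borders for i = 1 and i = m-1; for the inverse generator the column (t,-t,1) is replaced by
  (1,-1/t,1/t).\<close>
definition burau_gen :: "nat \<Rightarrow> int \<Rightarrow> rf mat" where
  "burau_gen m k = mat (m - 1) (m - 1) (\<lambda>(r, c).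
     let i = \<bar>k\<bar>; r' = int r; c' = int c in
     if c' = i - 1 then
       (if r' = i - 2 then (if k > 0 then tvar else 1)
        else if r' = i - 1 then (if k > 0 then - tvar else - inverse tvar)
        else if r' = i then (if k > 0 then 1 else inverse tvar)
        else 0)
     else (if r = c then 1 else 0))"

definition burau_word :: "nat \<Rightarrow> int list \<Rightarrow> rf mat" where
  "burau_word m w = foldr (\<lambda>k M. burau_gen m k * M) w (1\<^sub>m (m - 1))"

text \<open>Alexander polynomial of the closure of a braid word in B_m, via the Burau formula
  (1 + t + ... + t^(m-1)) * Delta = det (I - reduced Burau), well defined up to units +-t^i.\<close>
definition alexander_closure :: "nat \<Rightarrow> int list \<Rightarrow> rf" where
  "alexander_closure m w =
     det (1\<^sub>m (m - 1) - burau_word m w) * (1 - tvar) / (1 - tvar ^ m)"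

definition braid_K2 :: "nat \<Rightarrow> int list" where
  "braid_K2 n = [2, 1, 3, 2] @ concat (replicate (4 * n) [1, 2, 3]) @ [-3]
               @ concat (replicate 6 [2, 3])"

definition delta_K2 :: "nat \<Rightarrow> int poly" where
  "delta_K2 n =
     (\<Sum>i\<in>{0..n}. monom 1 (8*n+12+4*i) - monom 1 (8*n+11+4*i))
     + (monom 1 (8*n+9) - monom 1 (8*n+8))
     + (\<Sum>i\<in>{0..<2*n}. monom 1 (4*n+8+2*i) - monom 1 (4*n+7+2*i))
     + (monom 1 (4*n+6) - monom 1 (4*n+4))
     + (monom 1 (4*n+3) - monom 1 (4*n+1))
     + (\<Sum>i\<in>{0..<n}. monom 1 (4+4*i) - monom 1 (1+4*i))
     + 1"

end

theory Submission
  imports Defs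
begin

definition m3 :: "'a \<Rightarrow> 'a \<Rightarrow> 'a \<Rightarrow> 'a \<Rightarrow> 'a \<Rightarrow> 'a \<Rightarrow> 'a \<Rightarrow> 'a \<Rightarrow> 'a \<Rightarrow> 'a mat" where
  "m3 a b c d e f g h i = mat 3 3 (\<lambda>(r, s). [[a,b,c],[d,e,f],[g,h,i]] ! r ! s)"

lemma sum3: "(\<Sum>i\<in>{0..<3}. f i) = f 0 + f 1 + f (2::nat)"
  by (simp add: numeral_3_eq_3 numeral_2_eq_2)

lemma m3_mult:
  fixes a1 :: "'a::comm_ring_1"
  shows "m3 a1 a2 a3 a4 a5 a6 a7 a8 a9 * m3 b1 b2 b3 b4 b5 b6 b7 b8 b9 =
   m3 (a1*b1+a2*b4+a3*b7) (a1*b2+a2*b5+a3*b8) (a1*b3+a2*b6+a3*b9)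
      (a4*b1+a5*b4+a6*b7) (a4*b2+a5*b5+a6*b8) (a4*b3+a5*b6+a6*b9)
      (a7*b1+a8*b4+a9*b7) (a7*b2+a8*b5+a9*b8) (a7*b3+a8*b6+a9*b9)"
  apply (rule eq_matI)
  apply (auto simp: m3_def scalar_prod_def sum3 less_Suc_eq numeral_3_eq_3 numeral_2_eq_2)
  done

lemma m3_carrier: "m3 a b c d e f g h i \<in> carrier_mat 3 3"
  by (simp add: m3_def)

lemma det1: "A \<in> carrier_mat 1 1 \<Longrightarrow> det A = A $$ (0,0)"
  by (subst laplace_expansion_row[of A 1 0]) (auto simp: cofactor_def mat_delete_def)

lemma det2: "det (mat (Suc (Suc 0)) (Suc (Suc 0)) f) = f (0,0) * f (1,1) - f (0,1) * f (1,0)"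
  by (subst laplace_expansion_row[of _ 2 0]) (auto simp: cofactor_def numeral_2_eq_2 det1 mat_delete_def)

lemma det3: "det (m3 a b c d e f g h i :: 'a::comm_ring_1 mat) =
   a*e*i + b*f*g + c*d*h - c*e*g - a*f*h - b*d*i"
  apply (subst laplace_expansion_row[OF m3_carrier, of 0])
  apply (auto simp: cofactor_def numeral_3_eq_3 det2 mat_delete_def m3_def lessThan_Suc)
  apply (auto simp: numeral_2_eq_2 algebra_simps)
  done




lemma x_nz: "tvar \<noteq> 0"
  by (simp add: tvar_def)

lemma gen1: "burau_gen 4 1 = m3 (-tvar) 0 0 1 1 0 0 0 1"
  by (rule eq_matI) (auto simp: burau_gen_def m3_def numeral_3_eq_3 less_Suc_eq numeral_2_eq_2)
lemma gen2: "burau_gen 4 2 = m3 1 tvar 0 0 (-tvar) 0 0 1 1"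
  by (rule eq_matI) (auto simp: burau_gen_def m3_def numeral_3_eq_3 less_Suc_eq numeral_2_eq_2)
lemma gen3: "burau_gen 4 3 = m3 1 0 0 0 1 tvar 0 0 (-tvar)"
  by (rule eq_matI) (auto simp: burau_gen_def m3_def numeral_3_eq_3 less_Suc_eq numeral_2_eq_2)
lemma gen3i: "burau_gen 4 (-3) = m3 1 0 0 0 1 1 0 0 (- inverse tvar)"
  by (rule eq_matI) (auto simp: burau_gen_def m3_def numeral_3_eq_3 less_Suc_eq numeral_2_eq_2)

lemma gen_carrier: "burau_gen m k \<in> carrier_mat (m - 1) (m - 1)"
  by (simp add: burau_gen_def)

lemma bw_carrier: "burau_word m w \<in> carrier_mat (m - 1) (m - 1)"
  by (induction w) (auto simp: burau_word_def intro!: mult_carrier_mat gen_carrier[simplified])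

lemma bw_append: "burau_word m (xs @ ys) = burau_word m xs * burau_word m ys"
proof (induction xs)
  case Nil
  then show ?case using bw_carrier[of m ys] by (simp add: burau_word_def)
next
  case (Cons a xs)
  have "burau_word m ((a # xs) @ ys) = burau_gen m a * burau_word m (xs @ ys)"
    by (simp add: burau_word_def)
  also have "\<dots> = burau_gen m a * (burau_word m xs * burau_word m ys)" using Cons by simp
  also have "\<dots> = (burau_gen m a * burau_word m xs) * burau_word m ys"
    by (rule assoc_mult_mat[symmetric, OF gen_carrier bw_carrier bw_carrier])
  also have "burau_gen m a * burau_word m xs = burau_word m (a # xs)"
    by (simp add: burau_word_def)
  finally show ?case .
qed

lemma id3: "(1\<^sub>m 3 :: 'a::comm_ring_1 mat) = m3 1 0 0 0 1 0 0 0 1"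
  by (rule eq_matI) (auto simp: m3_def numeral_3_eq_3 less_Suc_eq numeral_2_eq_2)

lemma m3_minus: "m3 a1 a2 a3 a4 a5 a6 a7 a8 a9 - m3 b1 b2 b3 b4 b5 b6 b7 b8 b9 =
   m3 (a1-b1) (a2-b2) (a3-b3) (a4-b4) (a5-b5) (a6-b6) (a7-b7) (a8-b8) (a9-b9)"
  by (rule eq_matI) (auto simp: m3_def numeral_3_eq_3 less_Suc_eq numeral_2_eq_2)

lemma bw_single: "burau_word m [k] = burau_gen m k"
  using gen_carrier[of m k] by (simp add: burau_word_def)

lemma bw_cons: "burau_word m (k # w) = burau_gen m k * burau_word m w"
  by (simp add: burau_word_def)

lemma bw_nil: "burau_word 4 [] = m3 1 0 0 0 1 0 0 0 1"
  by (simp add: burau_word_def id3[symmetric])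

lemma rep4: "concat (replicate 4 [1,2,3::int]) = [1,2,3,1,2,3,1,2,3,1,2,3]"
  by (simp add: numeral_eq_Suc)
lemma rep6: "concat (replicate 6 [2,3::int]) = [2,3,2,3,2,3,2,3,2,3,2,3]"
  by (simp add: numeral_eq_Suc)

lemma bwP: "burau_word 4 [2,1,3,2] = m3 0 0 (tvar^2) (-tvar) (- (tvar^2)) (- (tvar^2)) 1 0 0"
  by (simp add: bw_cons bw_nil gen1 gen2 gen3 m3_mult algebra_simps power2_eq_square)

lemma bwT: "burau_word 4 (concat (replicate 4 [1,2,3])) = m3 (tvar^4) 0 0 0 (tvar^4) 0 0 0 (tvar^4)"
  by (simp add: rep4 rep6 bw_cons bw_nil gen1 gen2 gen3 m3_mult algebra_simps) (simp add: eval_nat_numeral algebra_simps)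

lemma bwQ: "burau_word 4 (concat (replicate 6 [2,3])) =
   m3 1 (tvar - tvar^3 + tvar^4 - tvar^6) (tvar^2 - tvar^3 + tvar^5 - tvar^6) 0 (tvar^6) 0 0 0 (tvar^6)"
  by (simp add: rep4 rep6 bw_cons bw_nil gen1 gen2 gen3 m3_mult algebra_simps) (simp add: eval_nat_numeral algebra_simps)

lemma bwRep: "burau_word 4 (concat (replicate (4*n) [1,2,3])) =
   m3 (tvar^(4*n)) 0 0 0 (tvar^(4*n)) 0 0 0 (tvar^(4*n))"
proof (induction n)
  case 0
  then show ?case by (simp add: bw_nil)
next
  case (Suc n)
  have "concat (replicate (4 * Suc n) [1,2,3::int]) =
        concat (replicate 4 [1,2,3]) @ concat (replicate (4*n) [1,2,3])"
    by (simp only: mult_Suc_right replicate_add concat_append)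
  then show ?case using Suc by (simp add: bw_append bwT m3_mult power_add)
qed

lemma bwK: "burau_word 4 (braid_K2 n) = (let s = tvar^(4*n) in
   m3 0 0 (-(s*tvar^7)) (-(s*tvar)) (s*(tvar^4-tvar^2-tvar^5+tvar^7-tvar^8))
      (s*(tvar^4-tvar^3-tvar^6+2*tvar^7-tvar^8)) s (s*(tvar-tvar^3+tvar^4-tvar^6))
      (s*(tvar^2-tvar^3+tvar^5-tvar^6)))"
proof -
  have e: "braid_K2 n = [2,1,3,2] @ (concat (replicate (4*n) [1,2,3]) @ ([-3] @ concat (replicate 6 [2,3])))"
    by (simp add: braid_K2_def)
  have g: "burau_word 4 [-3] = m3 1 0 0 0 1 1 0 0 (- inverse tvar)"
    by (simp add: bw_cons bw_nil gen3i m3_mult)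
  show ?thesis
    unfolding e bw_append bwP bwRep g bwQ m3_mult Let_def
    using x_nz by (simp add: field_simps eval_nat_numeral)
qed

lemma geom: "(1 - q) * (\<Sum>i<m. q^i) = (1 - q^m :: 'a::comm_ring_1)"
proof (induction m)
  case (Suc m)
  have "(1 - q) * (\<Sum>i<Suc m. q^i) = (1 - q) * (\<Sum>i<m. q^i) + (1 - q) * q^m"
    by (simp add: distrib_left)
  also have "\<dots> = 1 - q^Suc m" using Suc by (simp add: algebra_simps)
  finally show ?case .
qed simp

lemma to_fract_power: "to_fract (p ^ k) = to_fract p ^ k"
  by (induction k) simp_all

lemma to_fract_monom: "to_fract (monom 1 k :: int poly) = tvar ^ k"
  by (simp add: tvar_def monom_altdef to_fract_power)

lemma pwA: "(y::'a::comm_monoid_mult)^(a*n+b+c*i) = (y^n)^a * y^b * (y^c)^i"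
  by (simp add: power_add power_mult[symmetric] mult.commute)
lemma pwB: "(y::'a::comm_monoid_mult)^(a*n+b) = (y^n)^a * y^b"
  by (simp add: power_add power_mult[symmetric] mult.commute)
lemma pwC: "(y::'a::comm_monoid_mult)^(b+c*i) = y^b * (y^c)^i"
  by (simp add: power_add power_mult[symmetric] mult.commute)

lemma ringA: "s^2 * (x ^ 12 - x ^ 11) * (1 - x ^ 4 * s) +
     (s^2 * x ^ 9 - s^2 * x ^ 8) * (1 - x ^ 4) +
     s * (x ^ 8 - x ^ 7) * (1 + x\<^sup>2) * (1 - s) +
     (s * x ^ 6 - s * x ^ 4 + s * x ^ 3 - s * x + 1) *
     (1 - x ^ 4) +
     (x ^ 4 - x) * (1 - s) =
     1 - x +
     s *
     (x ^ 3 - 2 * x ^ 4 + x ^ 5 + x ^ 6 - 2 * x ^ 7 + 2 * x ^ 8 - x ^ 9) +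
     s^2 *
     (x ^ 7 - 2 * x ^ 8 + 2 * x ^ 9 - x ^ 10 - x ^ 11 + 2 * x ^ 12 -
      x ^ 13) +
     s^3 * (x ^ 15 - x ^ 16 :: 'a::comm_ring_1)"
  by (simp add: algebra_simps power2_eq_square power3_eq_cube flip: power_add power_Suc)
lemma delta_eq:
  "to_fract (delta_K2 n) * (1 - tvar^4) =
    1 - tvar + (tvar^n)^4*(tvar^3-2*tvar^4+tvar^5+tvar^6-2*tvar^7+2*tvar^8-tvar^9)
    + ((tvar^n)^4)^2*(tvar^7-2*tvar^8+2*tvar^9-tvar^10-tvar^11+2*tvar^12-tvar^13)
    + ((tvar^n)^4)^3*(tvar^15-tvar^16)"
proof -
  define x where "x = tvar"
  define r where "r = x^n"
  define g1 where "g1 = (\<Sum>i<Suc n. (x^4)^i)"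
  define g2 where "g2 = (\<Sum>i<2*n. (x^2)^i)"
  define g3 where "g3 = (\<Sum>i<n. (x^4)^i)"
  have S1: "(\<Sum>i\<in>{0..n}. tvar^(8*n+12+4*i) - tvar^(8*n+11+4*i))
      = r^8*(x^12-x^11)*g1"
    unfolding g1_def sum_distrib_left atLeast0AtMost lessThan_Suc_atMost
    apply (rule sum.cong, simp)
    apply (simp only: pwA)
    apply (simp add: x_def r_def algebra_simps)
    done
  have S2: "(\<Sum>i\<in>{0..<2*n}. tvar^(4*n+8+2*i) - tvar^(4*n+7+2*i))
      = r^4*(x^8-x^7)*g2"
    unfolding g2_def sum_distrib_left atLeast0LessThan
    apply (rule sum.cong, simp)
    apply (simp only: pwA)
    apply (simp add: x_def r_def algebra_simps)
    done
  have S3: "(\<Sum>i\<in>{0..<n}. tvar^(4+4*i) - tvar^(1+4*i))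
      = (x^4-x)*g3"
    unfolding g3_def sum_distrib_left atLeast0LessThan
    apply (rule sum.cong, simp)
    apply (simp only: pwC)
    apply (simp add: x_def algebra_simps)
    done
  have D: "to_fract (delta_K2 n) = r^8*(x^12-x^11)*g1 + (r^8*x^9 - r^8*x^8) + r^4*(x^8-x^7)*g2
      + (r^4*x^6 - r^4*x^4) + (r^4*x^3 - r^4*x) + (x^4-x)*g3 + 1"
    unfolding delta_K2_def
    apply (simp only: to_fract_add to_fract_diff to_fract_1 to_fract_sum to_fract_monom)
    apply (simp only: S1 S2 S3 pwB)
    apply (simp add: x_def r_def algebra_simps)
    done
  define s where "s = r^4"
  have G1: "(1-x^4)*g1 = 1 - x^4*r^4"
    unfolding g1_def geom r_def by (simp add: power_mult[symmetric] mult.commute)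
  have G2: "(1-x^2)*g2 = 1 - r^4"
    unfolding g2_def geom r_def by (simp add: power_mult[symmetric] mult.commute)
  have G3: "(1-x^4)*g3 = 1 - r^4"
    unfolding g3_def geom r_def by (simp add: power_mult[symmetric] mult.commute)
  have "to_fract (delta_K2 n) * (1 - x^4) = r^8*(x^12-x^11)*((1-x^4)*g1) + (r^8*x^9 - r^8*x^8)*(1-x^4)
      + r^4*(x^8-x^7)*(1+x^2)*((1-x^2)*g2)
      + (r^4*x^6 - r^4*x^4 + r^4*x^3 - r^4*x + 1)*(1-x^4) + (x^4-x)*((1-x^4)*g3)"
    unfolding D by (simp add: algebra_simps)
  also have "\<dots> = 1 - x + r^4*(x^3-2*x^4+x^5+x^6-2*x^7+2*x^8-x^9)
    + (r^4)^2*(x^7-2*x^8+2*x^9-x^10-x^11+2*x^12-x^13)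
    + (r^4)^3*(x^15-x^16)"
    unfolding G1 G2 G3 using ringA[of s x] unfolding s_def by (simp add: power_mult[symmetric])
  finally show ?thesis unfolding x_def r_def .
qed

lemma ringB0: "(1*(1 - s*(x^4-x^2-x^5+x^7-x^8))*(1 - s*(x^2-x^3+x^5-x^6)) + 0*(- (s*(x^4-x^3-x^6+2*x^7-x^8)))*(- s) + (s*x^7)*(s*x)*(- (s*(x-x^3+x^4-x^6))) - (s*x^7)*(1 - s*(x^4-x^2-x^5+x^7-x^8))*(- s) - 1*(- (s*(x^4-x^3-x^6+2*x^7-x^8)))*(- (s*(x-x^3+x^4-x^6))) - 0*(s*x)*(1 - s*(x^2-x^3+x^5-x^6))) * (1 - x) =
     1 - x + s * (x^3-2*x^4+x^5+x^6-2*x^7+2*x^8-x^9)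
    + s^2*(x^7-2*x^8+2*x^9-x^10-x^11+2*x^12-x^13)
    + s^3*(x^15-x^16) - (0::'a::comm_ring_1)"
  by (simp add: algebra_simps eval_nat_numeral)

lemma ringB:
  fixes a :: "'a::comm_ring_1"
  assumes "a = 1" "b = 0" "c = s*x^7" "d = s*x" "e = 1 - s*(x^4-x^2-x^5+x^7-x^8)"
   "f = - (s*(x^4-x^3-x^6+2*x^7-x^8))" "g = - s" "h = - (s*(x-x^3+x^4-x^6))"
   "i = 1 - s*(x^2-x^3+x^5-x^6)"
  shows "det (m3 a b c d e f g h i) * (1 - x) = 1 - x + s * (x^3-2*x^4+x^5+x^6-2*x^7+2*x^8-x^9)
    + s^2*(x^7-2*x^8+2*x^9-x^10-x^11+2*x^12-x^13)
    + s^3*(x^15-x^16)"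
  using ringB0[of s x] unfolding det3 assms by simp

lemma one_minus_x4: "1 - tvar^4 \<noteq> 0"
proof
  assume "1 - tvar^4 = 0"
  then have "to_fract ([:0,1:]^4 :: int poly) = to_fract 1"
    by (simp add: tvar_def to_fract_power)
  then have "([:0,1:]^4 :: int poly) = 1" by (simp only: to_fract_eq_iff)
  then have "poly ([:0,1:]^4 :: int poly) 0 = poly 1 0" by simp
  then show False by simp
qed

theorem theorem3p2:
  fixes n :: nat
  assumes "n \<ge> 1"
  shows "\<exists>(e::rf) (k::int). (e = 1 \<or> e = -1) \<and>
           alexander_closure 4 (braid_K2 n) = e * tvar powi k * to_fract (delta_K2 n)"
proof (intro exI conjI)
  show "(1::rf) = 1 \<or> 1 = -1" by simp
  have s: "tvar^(4*n) = (tvar^n)^4" by (simp add: power_mult[symmetric] mult.commute)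
  define E where "E = 1 - tvar + (tvar^n)^4 * (tvar^3-2*tvar^4+tvar^5+tvar^6-2*tvar^7+2*tvar^8-tvar^9)
    + ((tvar^n)^4)^2*(tvar^7-2*tvar^8+2*tvar^9-tvar^10-tvar^11+2*tvar^12-tvar^13)
    + ((tvar^n)^4)^3*(tvar^15-tvar^16)"
  have d3: "(4::nat) - 1 = 3" by simp
  have 1: "alexander_closure 4 (braid_K2 n) = E / (1 - tvar^4)"
    unfolding alexander_closure_def bwK Let_def d3 s
    apply (rule arg_cong[where f="\<lambda>z. z / (1 - tvar^4)"])
    unfolding id3 m3_minus E_def
    by (rule ringB) simp_all
  have 2: "to_fract (delta_K2 n) = E / (1 - tvar^4)"
    using delta_eq[of n] one_minus_x4 unfolding E_def by (simp add: eq_divide_eq)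
  show "alexander_closure 4 (braid_K2 n) = 1 * tvar powi 0 * to_fract (delta_K2 n)"
    using 1 2 by simp
qed
end
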